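(* Consider a hierarchical tensor factorization with mode tree $\mathcal T$ whose weight matrices evolve under gradient flow on $\phi_H$ for $t\ge0$. Let $\nu\in\mathrm{int}(\mathcal T)$ and $r\in[R_\nu]$. If there exists $t_0\ge0$ at which $w(t_0)=0$ for all $w\in\mathrm{LC}(\nu,r)$, then $w(t)=0$ for all $t\ge0$ and all $w\in\mathrm{LC}(\nu,r)$.
   Context: Fix $N\in\mathbb N$, $D_1,\dots,D_N\in\mathbb N$; $[K]:=\{1,\dots,K\}$; $\otimes$ the tensor product. A mode tree $\mathcal T$ over $[N]$ is a rooted tree whose nodes are labeled by subsets of $[N]$, with exactly $N$ leaves labeled $\{1\},\dots,\{N\}$, and where each interior node's label is the union of its children's labels; nodes are identified with labels, root $[N]$, $\mathrm{int}(\mathcal T)$ interior nodes, $Pa(\nu)$ parent, $C(\nu)$ children (fixed order). A hierarchical tensor factorization has $R_\nu\in\mathbb N$ ($\nu\in\mathrm{int}(\mathcal T)$), $R_{Pa([N])}:=1$, $R_{\{n\}}:=D_n$, weight matrices $W^{(\nu)}\in\mathbb R^{R_\nu\times R_{Pa(\nu)}}$. Intermediate tensors: $\mathcal W^{(\{n\},r)}:=W^{(\{n\})}_{:,r}$; for $\nu\in\mathrm{int}(\mathcal T)\setminus\{[N]\}$ (leaves to root), $r\in[R_{Pa(\nu)}]$: $\mathcal W^{(\nu,r)}:=\pi_\nu\big(\sum_{r'=1}^{R_\nu}W^{(\nu)}_{r',r}\bigotimes_{\nu_c\in C(\nu)}\mathcal W^{(\nu_c,r')}\big)$; end tensor $\mathcal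 W_H:=\pi_{[N]}\big(\sum_{r'=1}^{R_{[N]}}W^{([N])}_{r',1}\bigotimes_{\nu_c\in C([N])}\mathcal W^{(\nu_c,r')}\big)$, where $\pi_\nu$ permutes modes (ordered by children, each child's elements ascending) into ascending order of the elements of $\nu$. $\mathrm{LC}(\nu,r)$ is the collection of vectors $W^{(\nu)}_{r,:}$ and $W^{(\nu_c)}_{:,r}$, $\nu_c\in C(\nu)$. $\mathcal L_H:\mathbb R^{D_1\times\cdots\times D_N}\to\mathbb R_{\ge0}$ is differentiable and locally smooth (gradient Lipschitz on compact sets), $\phi_H((W^{(\nu)})_\nu):=\mathcal L_H(\mathcal W_H)$, gradient flow: $\frac{d}{dt}W^{(\nu)}(t)=-\frac{\partial}{\partial W^{(\nu)}}\phi_H((W^{(\nu')}(t))_{\nu'})$ for all $\nu\in\mathcal T$, $t\ge0$. *)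

theory Defs
  imports "HOL-Analysis.Analysis"
begin

datatype mtree = Leaf nat | Node "mtree list"

fun label :: "mtree \<Rightarrow> nat set" where
  "label (Leaf n) = {n}"
| "label (Node cs) = (\<Union>c\<in>set cs. label c)"

fun subtrees :: "mtree \<Rightarrow> mtree list" where
  "subtrees (Leaf n) = [Leaf n]"
| "subtrees (Node cs) = Node cs # concat (map subtrees cs)"

fun leaves :: "mtree \<Rightarrow> nat list" where
  "leaves (Leaf n) = [n]"
| "leaves (Node cs) = concat (map leaves cs)"

text \<open>Mode tree over [N]: root label [N], the leaves are exactly {1},...,{N} (each once),
interior nodes have children, and nodes are identified with their labels (labels distinct).\<close>

definition mode_tree :: "nat \<Rightarrow> mtree \<Rightarrow> bool" where
  "mode_tree N T \<longleftrightarrow>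
     label T = {1..N} \<and>
     mset (leaves T) = mset [1..<N+1] \<and>
     (\<forall>cs. Node cs \<in> set (subtrees T) \<longrightarrow> cs \<noteq> []) \<and>
     distinct (map label (subtrees T))"

text \<open>Nodes together with the number of columns of their weight matrix, i.e. R of the parent
(with R of the parent of the root being 1).\<close>

fun nodes_pc :: "(nat set \<Rightarrow> nat) \<Rightarrow> nat \<Rightarrow> mtree \<Rightarrow> (mtree \<times> nat) list" where
  "nodes_pc R p (Leaf n) = [(Leaf n, p)]"
| "nodes_pc R p (Node cs) = (Node cs, p) # concat (map (nodes_pc R (R (label (Node cs)))) cs)"

text \<open>Weights: \<open>\<theta> \<nu> i j\<close> is the entry (i,j) (0-based) of the matrix W^(\<nu>).
A tensor over the modes in a set \<nu> is represented as a function of a multi-index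
\<open>f :: nat \<Rightarrow> nat\<close> (f n is the index in mode n, 0-based); in this representation the mode
permutation \<pi>_\<nu> is the identity. \<open>tens R \<theta> t r\<close> is the intermediate tensor W^(t,r).\<close>

fun tens :: "(nat set \<Rightarrow> nat) \<Rightarrow> (nat set \<Rightarrow> nat \<Rightarrow> nat \<Rightarrow> real) \<Rightarrow> mtree \<Rightarrow> nat
             \<Rightarrow> (nat \<Rightarrow> nat) \<Rightarrow> real" where
  "tens R \<theta> (Leaf n) r f = \<theta> {n} (f n) r"
| "tens R \<theta> (Node cs) r f =
     (\<Sum>r'<R (label (Node cs)). \<theta> (label (Node cs)) r' r * prod_list (map (\<lambda>c. tens R \<theta> c r' f) cs))"

definition idx_set :: "nat \<Rightarrow> (nat \<Rightarrow> nat) \<Rightarrow> (nat \<Rightarrow> nat) set" where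
  "idx_set N D = {f. (\<forall>n\<in>{1..N}. f n < D n) \<and> (\<forall>n. n \<notin> {1..N} \<longrightarrow> f n = 0)}"

text \<open>The end tensor W_H, as an element of the Euclidean space \<open>real^'i\<close>, where the finite
type \<open>'i\<close> enumerates the valid multi-indices via \<open>idx\<close>.\<close>

definition end_tensor :: "('i::finite \<Rightarrow> nat \<Rightarrow> nat) \<Rightarrow> (nat set \<Rightarrow> nat) \<Rightarrow> mtree
    \<Rightarrow> (nat set \<Rightarrow> nat \<Rightarrow> nat \<Rightarrow> real) \<Rightarrow> real^'i" where
  "end_tensor idx R T \<theta> = (\<chi> k. tens R \<theta> T 0 (idx k))"

definition phiH :: "(real^'i \<Rightarrow> real) \<Rightarrow> ('i::finite \<Rightarrow> nat \<Rightarrow> nat) \<Rightarrow> (nat set \<Rightarrow> nat) \<Rightarrow> mtree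
    \<Rightarrow> (nat set \<Rightarrow> nat \<Rightarrow> nat \<Rightarrow> real) \<Rightarrow> real" where
  "phiH L idx R T \<theta> = L (end_tensor idx R T \<theta>)"

definition upd :: "(nat set \<Rightarrow> nat \<Rightarrow> nat \<Rightarrow> real) \<Rightarrow> nat set \<Rightarrow> nat \<Rightarrow> nat \<Rightarrow> real
    \<Rightarrow> (nat set \<Rightarrow> nat \<Rightarrow> nat \<Rightarrow> real)" where
  "upd \<theta> \<nu> i j s = \<theta>(\<nu> := (\<theta> \<nu>)(i := (\<theta> \<nu> i)(j := s)))"

definition gradient_flow :: "(real^'i \<Rightarrow> real) \<Rightarrow> ('i::finite \<Rightarrow> nat \<Rightarrow> nat) \<Rightarrow> (nat set \<Rightarrow> nat)
    \<Rightarrow> mtree \<Rightarrow> (real \<Rightarrow> nat set \<Rightarrow> nat \<Rightarrow> nat \<Rightarrow> real) \<Rightarrow> bool" where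
  "gradient_flow L idx R T \<Theta> \<longleftrightarrow>
     (\<forall>t\<ge>0. \<forall>(\<nu>, p)\<in>set (nodes_pc R 1 T). \<forall>i<R (label \<nu>). \<forall>j<p.
        ((\<lambda>s. \<Theta> s (label \<nu>) i j) has_real_derivative
           - deriv (\<lambda>x. phiH L idx R T (upd (\<Theta> t) (label \<nu>) i j x)) (\<Theta> t (label \<nu>) i j))
        (at t within {0..}))"

text \<open>The local component LC(\<nu>,r) for \<nu> = Node cs with R_Pa(\<nu>) = p vanishes.\<close>

definition LC_zero :: "(nat set \<Rightarrow> nat) \<Rightarrow> (nat set \<Rightarrow> nat \<Rightarrow> nat \<Rightarrow> real) \<Rightarrow> mtree list \<Rightarrow> nat
    \<Rightarrow> nat \<Rightarrow> bool" where
  "LC_zero R \<theta> cs p r \<longleftrightarrow>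
     (\<forall>j<p. \<theta> (label (Node cs)) r j = 0) \<and>
     (\<forall>c\<in>set cs. \<forall>i<R (label c). \<theta> (label c) i r = 0)"

definition grad :: "('a::euclidean_space \<Rightarrow> real) \<Rightarrow> 'a \<Rightarrow> 'a" where
  "grad L x = (\<Sum>b\<in>Basis. frechet_derivative L (at x) b *\<^sub>R b)"

end

theory Submission
  imports Defs
begin

lemma gronwall0:
  fixes E E' :: "real \<Rightarrow> real"
  assumes der: "\<And>t. t \<ge> 0 \<Longrightarrow> (E has_real_derivative E' t) (at t within {0..})"
    and bnd: "\<And>t. 0 \<le> t \<Longrightarrow> t \<le> Tm \<Longrightarrow> \<bar>E' t\<bar> \<le> C * E t"
    and nn: "\<And>t. 0 \<le> t \<Longrightarrow> E t \<ge> 0"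
    and t0: "0 \<le> t0" "t0 \<le> Tm" "E t0 = 0"
    and t: "0 \<le> t" "t \<le> Tm"
  shows "E t = 0"
proof -
  have cont: "continuous_on {a..b} E" if "0 \<le> a" for a b
  proof -
    have "continuous_on {0..} E"
      unfolding continuous_on_eq_continuous_within
    proof
      fix x :: real assume "x \<in> {0..}"
      then show "continuous (at x within {0..}) E" using der[of x] by (intro DERIV_continuous) auto
    qed
    then show ?thesis by (rule continuous_on_subset) (use that in auto)
  qed
  have dat: "(E has_real_derivative E' x) (at x)" if "0 < x" for x
  proof -
    have "(E has_real_derivative E' x) (at x within {0<..})"
    proof (rule has_field_derivative_subset)
      show "(E has_real_derivative E' x) (at x within {0..})" using der that by simp
      show "{0<..} \<subseteq> {0::real..}" by (simp add: subset_eq)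
    qed
    moreover have "at x within {0<..} = at x" using that by (intro at_within_open) auto
    ultimately show ?thesis by simp
  qed
  have hder: "((\<lambda>s. E s * exp (K * s)) has_real_derivative
      (E' x * exp (K * x) + E x * (exp (K * x) * K))) (at x)" if "0 < x" for x K
  proof -
    have e: "((\<lambda>s. exp (K * s)) has_real_derivative exp (K * x) * K) (at x)"
      by (auto intro!: derivative_eq_intros)
    from DERIV_mult[OF dat[OF that] e] show ?thesis by (simp add: mult.commute mult.left_commute)
  qed
  show ?thesis
  proof (cases "t0 \<le> t")
    case True
    define h where "h s = E s * exp ((- C) * s)" for s
    have "h t0 \<ge> h t"
    proof (rule DERIV_nonpos_imp_decreasing_open[of t0 t h, OF True])
      fix x assume x: "t0 < x" "x < t"
      have "(h has_real_derivative (E' x * exp ((- C) * x) + E x * (exp ((- C) * x) * (- C)))) (at x)"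
        unfolding h_def using x t0 by (intro hder) auto
      moreover have "E' x * exp ((- C) * x) + E x * (exp ((- C) * x) * (- C)) \<le> 0"
      proof -
        have "E' x \<le> C * E x" using bnd[of x] x t0 t by auto
        then have "(E' x - C * E x) * exp ((- C) * x) \<le> 0"
          by (simp add: mult_nonpos_nonneg)
        then show ?thesis by (simp add: algebra_simps)
      qed
      ultimately show "\<exists>y. (h has_real_derivative y) (at x) \<and> y \<le> 0" by blast
    next
      show "continuous_on {t0..t} h" unfolding h_def using cont[OF t0(1)]
        by (auto intro!: continuous_intros)
    qed
    then have "E t * exp ((- C) * t) \<le> 0" using t0 by (simp add: h_def)
    then have "E t \<le> 0" using mult_le_0_iff[of "E t"] by auto
    then show ?thesis using nn[OF t(1)] by simp
  next
    case False
    define h where "h s = E s * exp (C * s)" for s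
    have "h t \<le> h t0"
    proof (rule DERIV_nonneg_imp_increasing_open[of t t0 h])
      show "t \<le> t0" using False by simp
      fix x assume x: "t < x" "x < t0"
      have "(h has_real_derivative (E' x * exp (C * x) + E x * (exp (C * x) * C))) (at x)"
        unfolding h_def using x t by (intro hder) auto
      moreover have "E' x * exp (C * x) + E x * (exp (C * x) * C) \<ge> 0"
      proof -
        have "- E' x \<le> C * E x" using bnd[of x] x t0 t by auto
        then have "(E' x + C * E x) * exp (C * x) \<ge> 0"
          by simp
        then show ?thesis by (simp add: algebra_simps)
      qed
      ultimately show "\<exists>y. (h has_real_derivative y) (at x) \<and> y \<ge> 0" by blast
    next
      show "continuous_on {t..t0} h" unfolding h_def using cont[OF t(1)]
        by (auto intro!: continuous_intros)
    qed
    then have "E t * exp (C * t) \<le> 0" using t0 by (simp add: h_def)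
    then have "E t \<le> 0" using mult_le_0_iff[of "E t"] by auto
    then show ?thesis using nn[OF t(1)] by simp
  qed
qed

definition wft :: "mtree \<Rightarrow> bool" where
  "wft s \<longleftrightarrow> distinct (leaves s) \<and> (\<forall>cs. Node cs \<in> set (subtrees s) \<longrightarrow> cs \<noteq> []) \<and>
     distinct (map label (subtrees s))"

lemma label_leaves: "label s = set (leaves s)"
  by (induction s) auto

lemma subtree_self: "s \<in> set (subtrees s)"
  by (cases s) auto

lemma subtrees_label: "x \<in> set (subtrees s) \<Longrightarrow> label x \<subseteq> label s"
  by (induction s) auto

lemma subtrees_trans: "x \<in> set (subtrees s) \<Longrightarrow> y \<in> set (subtrees x) \<Longrightarrow> y \<in> set (subtrees s)"
  by (induction s) auto

lemma child_subtree: "d \<in> set ds \<Longrightarrow> x \<in> set (subtrees d) \<Longrightarrow> x \<in> set (subtrees (Node ds))"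
  by auto

lemma wft_child:
  assumes "wft (Node ds)" "d \<in> set ds"
  shows "wft d \<and> label d \<noteq> label (Node ds)"
proof -
  obtain xs ys where ds: "ds = xs @ d # ys" using split_list[OF assms(2)] by blast
  have dl: "distinct (leaves d)" using assms(1) unfolding wft_def ds by simp
  have ne: "\<forall>cs. Node cs \<in> set (subtrees d) \<longrightarrow> cs \<noteq> []"
    using assms unfolding wft_def by auto
  have dm: "distinct (map label (subtrees d))"
    using assms(1) unfolding wft_def ds by (simp add: map_concat)
  have "label (Node ds) \<notin> label ` set (subtrees d)"
    using assms(1) unfolding wft_def ds by (simp add: map_concat)
  then have "label d \<noteq> label (Node ds)" using subtree_self[of d] by blast
  then show ?thesis using dl ne dm unfolding wft_def by blast
qed

lemma wft_split:
  assumes "wft (Node ds)" "ds = xs @ d # ys" "d' \<in> set xs \<union> set ys"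
  shows "label d \<inter> label d' = {}"
proof -
  have "distinct (leaves (Node ds))" using assms(1) unfolding wft_def by blast
  then have D: "distinct (concat (map leaves xs) @ leaves d @ concat (map leaves ys))"
    using assms(2) by simp
  have A: "set (leaves d) \<inter> set (concat (map leaves xs)) = {}"
    and B: "set (leaves d) \<inter> set (concat (map leaves ys)) = {}"
  proof -
    have D1: "set (concat (map leaves xs)) \<inter> set (leaves d @ concat (map leaves ys)) = {}"
      and D2: "set (leaves d) \<inter> set (concat (map leaves ys)) = {}"
      using D[unfolded distinct_append] by blast+
    from D1 have "set (leaves d) \<inter> set (concat (map leaves xs)) = {}"
      unfolding set_append by blast
    then show "set (leaves d) \<inter> set (concat (map leaves xs)) = {}"
      and "set (leaves d) \<inter> set (concat (map leaves ys)) = {}" using D2 by blast+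
  qed
  have "set (leaves d') \<subseteq> set (concat (map leaves xs)) \<union> set (concat (map leaves ys))"
    using assms(3) by auto
  then show ?thesis using A B unfolding label_leaves by blast
qed

lemma wft_sub: "wft s \<Longrightarrow> x \<in> set (subtrees s) \<Longrightarrow> wft x"
proof (induction s)
  case (Leaf n) then show ?case by simp
next
  case (Node ds)
  show ?case
  proof (cases "x = Node ds")
    case True then show ?thesis using Node by simp
  next
    case False
    then obtain d where d: "d \<in> set ds" "x \<in> set (subtrees d)" using Node.prems by auto
    then show ?thesis using Node.IH[OF d(1)] wft_child[OF Node.prems(1) d(1)] by blast
  qed
qed

lemma wft_ne: "wft s \<Longrightarrow> label s \<noteq> {}"
proof (induction s)
  case (Leaf n) then show ?case by simp
next
  case (Node ds)
  then have "ds \<noteq> []" unfolding wft_def using subtree_self[of "Node ds"] by blast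
  then obtain d where d: "d \<in> set ds" by (cases ds) auto
  then show ?case using Node.IH[OF d] wft_child[OF Node.prems d] by auto
qed

lemma nodes_sub: "(x, q) \<in> set (nodes_pc R P s) \<Longrightarrow> x \<in> set (subtrees s)"
  by (induction s arbitrary: P) auto

lemma nodes_head: "(s, P) \<in> set (nodes_pc R P s)"
  by (cases s) auto

lemma nodes_size: "(x, q) \<in> set (nodes_pc R P s) \<Longrightarrow> (x = s \<and> q = P) \<or> size x < size s"
proof (induction s arbitrary: P)
  case (Leaf n) then show ?case by simp
next
  case (Node ds)
  show ?case
  proof (cases "(x, q) = (Node ds, P)")
    case True then show ?thesis by simp
  next
    case False
    then obtain d where d: "d \<in> set ds" "(x, q) \<in> set (nodes_pc R (R (label (Node ds))) d)"
      using Node.prems by auto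
    have "size d < size (Node ds)" using d(1) by (induction ds) auto
    then show ?thesis using Node.IH[OF d] by auto
  qed
qed

lemma nodes_self: "(s, q) \<in> set (nodes_pc R P s) \<Longrightarrow> q = P"
  using nodes_size by blast

lemma nodes_child: "(Node cs, p) \<in> set (nodes_pc R P s) \<Longrightarrow> c \<in> set cs \<Longrightarrow>
    (c, R (label (Node cs))) \<in> set (nodes_pc R P s)"
proof (induction s arbitrary: P)
  case (Leaf n) then show ?case by simp
next
  case (Node ds)
  show ?case
  proof (cases "(Node cs, p) = (Node ds, P)")
    case True then show ?thesis using Node.prems nodes_head[where s=c and R=R] by auto
  next
    case False
    then obtain d where d: "d \<in> set ds" "(Node cs, p) \<in> set (nodes_pc R (R (label (Node ds))) d)"
      using Node.prems by auto
    then show ?thesis using Node.IH[OF d Node.prems(2)] by auto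
  qed
qed

lemma tens_cong: "(\<forall>x\<in>set (subtrees s). \<theta> (label x) = \<theta>' (label x)) \<Longrightarrow>
    tens R \<theta> s q f = tens R \<theta>' s q f"
proof (induction s arbitrary: q)
  case (Leaf n) then show ?case by simp
next
  case (Node ds)
  have th: "\<theta> (label (Node ds)) = \<theta>' (label (Node ds))" using Node.prems by simp
  have m: "map (\<lambda>c. tens R \<theta> c r' f) ds = map (\<lambda>c. tens R \<theta>' c r' f) ds" for r'
  proof (rule map_cong[OF refl])
    fix d assume d: "d \<in> set ds"
    then show "tens R \<theta> d r' f = tens R \<theta>' d r' f"
      using Node.IH[OF d] Node.prems child_subtree[OF d] by blast
  qed
  show ?case by (simp only: tens.simps th m)
qed

lemma prod_split3: "ds = xs @ d # ys \<Longrightarrow>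
  prod_list (map g ds) = prod_list (map g xs) * g d * prod_list (map g ys)"
  by (simp add: mult.assoc)

lemma tens_lin:
  assumes "wft s" "(u, P') \<in> set (nodes_pc R P s)"
    "\<forall>\<mu>. \<mu> \<notin> label ` set (subtrees u) \<longrightarrow> \<theta>1 \<mu> = \<theta>3 \<mu> \<and> \<theta>2 \<mu> = \<theta>3 \<mu>"
    "\<forall>q<P'. tens R \<theta>3 u q f = \<alpha> * tens R \<theta>1 u q f + \<beta> * tens R \<theta>2 u q f"
    "q < P"
  shows "tens R \<theta>3 s q f = \<alpha> * tens R \<theta>1 s q f + \<beta> * tens R \<theta>2 s q f"
  using assms
proof (induction s arbitrary: P q)
  case (Leaf n)
  then show ?case by auto
next
  case (Node ds)
  show ?case
  proof (cases "u = Node ds")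
    case True
    then have "P' = P" using Node.prems(2) nodes_self by blast
    then show ?thesis using Node.prems True by blast
  next
    case False
    define S where "S = label (Node ds)"
    obtain d where d: "d \<in> set ds" "(u, P') \<in> set (nodes_pc R (R S) d)"
      using Node.prems(2) False unfolding S_def by auto
    have wd: "wft d" and ldS: "label d \<noteq> S" using wft_child[OF Node.prems(1) d(1)] S_def by auto
    have IHd: "\<forall>q<R S. tens R \<theta>3 d q f = \<alpha> * tens R \<theta>1 d q f + \<beta> * tens R \<theta>2 d q f"
      using Node.IH[OF d(1) wd d(2) Node.prems(3,4)] by blast
    have ud: "label u \<subseteq> label d" using subtrees_label[OF nodes_sub[OF d(2)]] .
    have dS: "label d \<subseteq> S" unfolding S_def using d(1) by auto
    have LU: "\<And>y. y \<in> set (subtrees u) \<Longrightarrow> label y \<subseteq> label d"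
      using subtrees_label ud by blast
    obtain xs ys where ds: "ds = xs @ d # ys" using split_list[OF d(1)] by blast
    have oth: "tens R \<theta>i d' r f = tens R \<theta>3 d' r f"
      if dd: "d' \<in> set xs \<union> set ys" and thi: "\<theta>i = \<theta>1 \<or> \<theta>i = \<theta>2" for d' r \<theta>i
    proof (rule tens_cong, rule ballI)
      fix x assume x: "x \<in> set (subtrees d')"
      have d'ds: "d' \<in> set ds" using dd ds by auto
      have disj: "label d \<inter> label d' = {}" using wft_split[OF Node.prems(1) ds dd] .
      have "wft x" using wft_sub[OF conjunct1[OF wft_child[OF Node.prems(1) d'ds]] x] .
      then have ne: "label x \<noteq> {}" by (rule wft_ne)
      have "label x \<subseteq> label d'" using subtrees_label[OF x] .
      then have "label x \<notin> label ` set (subtrees u)" using LU disj ne by blast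
      then show "\<theta>i (label x) = \<theta>3 (label x)" using Node.prems(3) thi by blast
    qed
    have Snot: "S \<notin> label ` set (subtrees u)" using LU dS ldS by blast
    then have thS: "\<theta>1 S = \<theta>3 S" "\<theta>2 S = \<theta>3 S" using Node.prems(3) by auto
    define PX where "PX r' = prod_list (map (\<lambda>c. tens R \<theta>3 c r' f) xs)" for r'
    define PY where "PY r' = prod_list (map (\<lambda>c. tens R \<theta>3 c r' f) ys)" for r'
    have gsplit: "prod_list (map (\<lambda>c. tens R \<theta>i c r' f) ds) = PX r' * tens R \<theta>i d r' f * PY r'"
      if thi: "\<theta>i = \<theta>1 \<or> \<theta>i = \<theta>2 \<or> \<theta>i = \<theta>3" for \<theta>i r'
    proof -
      have "map (\<lambda>c. tens R \<theta>i c r' f) xs = map (\<lambda>c. tens R \<theta>3 c r' f) xs"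
        using oth thi by (intro map_cong) auto
      moreover have "map (\<lambda>c. tens R \<theta>i c r' f) ys = map (\<lambda>c. tens R \<theta>3 c r' f) ys"
        using oth thi by (intro map_cong) auto
      ultimately show ?thesis unfolding PX_def PY_def using prod_split3[OF ds] by metis
    qed
    have T3: "tens R \<theta>3 (Node ds) q f = (\<Sum>r'<R S. \<theta>3 S r' q * (PX r' * tens R \<theta>3 d r' f * PY r'))"
      using gsplit[of \<theta>3] by (simp only: tens.simps S_def[symmetric]) simp
    have T1: "tens R \<theta>1 (Node ds) q f = (\<Sum>r'<R S. \<theta>3 S r' q * (PX r' * tens R \<theta>1 d r' f * PY r'))"
      using gsplit[of \<theta>1] thS by (simp only: tens.simps S_def[symmetric]) simp
    have T2: "tens R \<theta>2 (Node ds) q f = (\<Sum>r'<R S. \<theta>3 S r' q * (PX r' * tens R \<theta>2 d r' f * PY r'))"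
      using gsplit[of \<theta>2] thS by (simp only: tens.simps S_def[symmetric]) simp
    have "(\<Sum>r'<R S. \<theta>3 S r' q * (PX r' * tens R \<theta>3 d r' f * PY r')) =
          (\<Sum>r'<R S. \<alpha> * (\<theta>3 S r' q * (PX r' * tens R \<theta>1 d r' f * PY r')) +
                     \<beta> * (\<theta>3 S r' q * (PX r' * tens R \<theta>2 d r' f * PY r')))"
      by (rule sum.cong[OF refl]) (simp add: IHd algebra_simps)
    also have "\<dots> = \<alpha> * (\<Sum>r'<R S. \<theta>3 S r' q * (PX r' * tens R \<theta>1 d r' f * PY r')) +
                     \<beta> * (\<Sum>r'<R S. \<theta>3 S r' q * (PX r' * tens R \<theta>2 d r' f * PY r'))"
      by (simp add: sum.distrib sum_distrib_left)
    finally show ?thesis using T1 T2 T3 by simp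
  qed
qed

lemma prod_list_lip:
  fixes g h :: "'a \<Rightarrow> real"
  assumes "Bm \<ge> 1" "D \<ge> 0" "\<forall>d\<in>set ds. \<bar>g d\<bar> \<le> Bm \<and> \<bar>h d\<bar> \<le> Bm \<and> \<bar>g d - h d\<bar> \<le> D"
  shows "\<bar>prod_list (map g ds)\<bar> \<le> Bm ^ length ds \<and> \<bar>prod_list (map h ds)\<bar> \<le> Bm ^ length ds \<and>
    \<bar>prod_list (map g ds) - prod_list (map h ds)\<bar> \<le> real (length ds) * Bm ^ length ds * D"
  using assms(3)
proof (induction ds)
  case Nil then show ?case by simp
next
  case (Cons x xs)
  let ?X = "prod_list (map g xs)" and ?Y = "prod_list (map h xs)" and ?n = "length xs"
  have IH: "\<bar>?X\<bar> \<le> Bm ^ ?n" "\<bar>?Y\<bar> \<le> Bm ^ ?n" "\<bar>?X - ?Y\<bar> \<le> real ?n * Bm ^ ?n * D"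
    using Cons by auto
  have x: "\<bar>g x\<bar> \<le> Bm" "\<bar>h x\<bar> \<le> Bm" "\<bar>g x - h x\<bar> \<le> D" using Cons.prems by auto
  have b0: "0 \<le> Bm ^ ?n" using assms(1) by simp
  have a1: "\<bar>g x * ?X\<bar> \<le> Bm * Bm ^ ?n"
    unfolding abs_mult by (rule mult_mono) (use x IH assms(1) in auto)
  have a2: "\<bar>h x * ?Y\<bar> \<le> Bm * Bm ^ ?n"
    unfolding abs_mult by (rule mult_mono) (use x IH assms(1) in auto)
  have "g x * ?X - h x * ?Y = g x * (?X - ?Y) + (g x - h x) * ?Y" by (simp add: algebra_simps)
  then have "\<bar>g x * ?X - h x * ?Y\<bar> \<le> \<bar>g x\<bar> * \<bar>?X - ?Y\<bar> + \<bar>g x - h x\<bar> * \<bar>?Y\<bar>"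
    by (metis abs_mult abs_triangle_ineq)
  also have "\<dots> \<le> Bm * (real ?n * Bm ^ ?n * D) + D * Bm ^ ?n"
    by (intro add_mono mult_mono) (use x IH assms in auto)
  also have "\<dots> \<le> real (Suc ?n) * (Bm * Bm ^ ?n) * D"
  proof -
    have "D * Bm ^ ?n \<le> D * (Bm * Bm ^ ?n)"
      using assms b0 by (intro mult_left_mono) (auto simp: mult_le_cancel_right1)
    then show ?thesis by (simp add: algebra_simps)
  qed
  finally show ?case using a1 a2 by simp
qed

lemma abs_diff_prod: "\<bar>a * x - b * y\<bar> \<le> \<bar>a\<bar> * \<bar>x - y\<bar> + \<bar>a - b\<bar> * \<bar>y::real\<bar>"
proof -
  have "a * x - b * y = a * (x - y) + (a - b) * y" by (simp add: algebra_simps)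
  then show ?thesis using abs_triangle_ineq[of "a * (x - y)" "(a - b) * y"] by (simp add: abs_mult)
qed

lemma tens_lip:
  fixes M :: real
  assumes M: "M \<ge> 0"
  shows "\<exists>K B. K \<ge> 0 \<and> B \<ge> 0 \<and> (\<forall>\<theta> \<theta>' \<delta> q f. \<delta> \<ge> 0 \<longrightarrow>
     (\<forall>(s', p')\<in>set (nodes_pc R P s). \<forall>i<R (label s'). \<forall>j<p'.
        \<bar>\<theta> (label s') i j\<bar> \<le> M \<and> \<bar>\<theta>' (label s') i j\<bar> \<le> M \<and> \<bar>\<theta> (label s') i j - \<theta>' (label s') i j\<bar> \<le> \<delta>) \<longrightarrow>
     q < P \<longrightarrow> (\<forall>n\<in>set (leaves s). f n < R {n}) \<longrightarrow>
     \<bar>tens R \<theta> s q f\<bar> \<le> B \<and> \<bar>tens R \<theta> s q f - tens R \<theta>' s q f\<bar> \<le> K * \<delta>)"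
proof (induction s arbitrary: P)
  case (Leaf m)
  have body: "\<bar>tens R \<theta> (Leaf m) q f\<bar> \<le> M \<and> \<bar>tens R \<theta> (Leaf m) q f - tens R \<theta>' (Leaf m) q f\<bar> \<le> 1 * \<delta>"
    if h: "\<forall>(s', p')\<in>set (nodes_pc R P (Leaf m)). \<forall>i<R (label s'). \<forall>j<p'.
        \<bar>\<theta> (label s') i j\<bar> \<le> M \<and> \<bar>\<theta>' (label s') i j\<bar> \<le> M \<and> \<bar>\<theta> (label s') i j - \<theta>' (label s') i j\<bar> \<le> \<delta>"
      and q: "q < P" and f: "\<forall>n\<in>set (leaves (Leaf m)). f n < R {n}"
    for \<theta> \<theta>' :: "nat set \<Rightarrow> nat \<Rightarrow> nat \<Rightarrow> real" and \<delta> :: real and q f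
  proof -
    have "f m < R {m}" using f by simp
    then have "\<bar>\<theta> {m} (f m) q\<bar> \<le> M \<and> \<bar>\<theta>' {m} (f m) q\<bar> \<le> M \<and> \<bar>\<theta> {m} (f m) q - \<theta>' {m} (f m) q\<bar> \<le> \<delta>"
      using h q by simp
    then show ?thesis by auto
  qed
  show ?case
    apply (rule exI[of _ "1::real"], rule exI[of _ M], intro conjI allI impI)
       apply simp
      apply (rule M)
    using body by blast+
next
  case (Node ds)
  define S where "S = label (Node ds)"
  have "\<forall>d\<in>set ds. \<exists>KB. fst KB \<ge> 0 \<and> snd KB \<ge> 0 \<and> (\<forall>\<theta> \<theta>' \<delta> q f. \<delta> \<ge> 0 \<longrightarrow>
     (\<forall>(s', p')\<in>set (nodes_pc R (R S) d). \<forall>i<R (label s'). \<forall>j<p'.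
        \<bar>\<theta> (label s') i j\<bar> \<le> M \<and> \<bar>\<theta>' (label s') i j\<bar> \<le> M \<and> \<bar>\<theta> (label s') i j - \<theta>' (label s') i j\<bar> \<le> \<delta>) \<longrightarrow>
     q < R S \<longrightarrow> (\<forall>n\<in>set (leaves d). f n < R {n}) \<longrightarrow>
     \<bar>tens R \<theta> d q f\<bar> \<le> snd KB \<and> \<bar>tens R \<theta> d q f - tens R \<theta>' d q f\<bar> \<le> fst KB * \<delta>)"
  proof
    fix d assume "d \<in> set ds"
    from Node.IH[OF this, of "R S"] obtain K B where "K \<ge> 0 \<and> B \<ge> 0 \<and> (\<forall>\<theta> \<theta>' \<delta> q f. \<delta> \<ge> 0 \<longrightarrow>
     (\<forall>(s', p')\<in>set (nodes_pc R (R S) d). \<forall>i<R (label s'). \<forall>j<p'.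
        \<bar>\<theta> (label s') i j\<bar> \<le> M \<and> \<bar>\<theta>' (label s') i j\<bar> \<le> M \<and> \<bar>\<theta> (label s') i j - \<theta>' (label s') i j\<bar> \<le> \<delta>) \<longrightarrow>
     q < R S \<longrightarrow> (\<forall>n\<in>set (leaves d). f n < R {n}) \<longrightarrow>
     \<bar>tens R \<theta> d q f\<bar> \<le> B \<and> \<bar>tens R \<theta> d q f - tens R \<theta>' d q f\<bar> \<le> K * \<delta>)" by blast
    then show "\<exists>KB. fst KB \<ge> 0 \<and> snd KB \<ge> 0 \<and> (\<forall>\<theta> \<theta>' \<delta> q f. \<delta> \<ge> 0 \<longrightarrow>
     (\<forall>(s', p')\<in>set (nodes_pc R (R S) d). \<forall>i<R (label s'). \<forall>j<p'.
        \<bar>\<theta> (label s') i j\<bar> \<le> M \<and> \<bar>\<theta>' (label s') i j\<bar> \<le> M \<and> \<bar>\<theta> (label s') i j - \<theta>' (label s') i j\<bar> \<le> \<delta>) \<longrightarrow>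
     q < R S \<longrightarrow> (\<forall>n\<in>set (leaves d). f n < R {n}) \<longrightarrow>
     \<bar>tens R \<theta> d q f\<bar> \<le> snd KB \<and> \<bar>tens R \<theta> d q f - tens R \<theta>' d q f\<bar> \<le> fst KB * \<delta>)"
      by (intro exI[of _ "(K, B)"]) simp
  qed
  from bchoice[OF this] obtain KB where KB: "\<forall>d\<in>set ds. fst (KB d) \<ge> 0 \<and> snd (KB d) \<ge> 0 \<and> (\<forall>\<theta> \<theta>' \<delta> q f. \<delta> \<ge> 0 \<longrightarrow>
     (\<forall>(s', p')\<in>set (nodes_pc R (R S) d). \<forall>i<R (label s'). \<forall>j<p'.
        \<bar>\<theta> (label s') i j\<bar> \<le> M \<and> \<bar>\<theta>' (label s') i j\<bar> \<le> M \<and> \<bar>\<theta> (label s') i j - \<theta>' (label s') i j\<bar> \<le> \<delta>) \<longrightarrow>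
     q < R S \<longrightarrow> (\<forall>n\<in>set (leaves d). f n < R {n}) \<longrightarrow>
     \<bar>tens R \<theta> d q f\<bar> \<le> snd (KB d) \<and> \<bar>tens R \<theta> d q f - tens R \<theta>' d q f\<bar> \<le> fst (KB d) * \<delta>)"
    by (elim exE) (rule that)
  define Bm where "Bm = 1 + (\<Sum>d\<in>set ds. snd (KB d))"
  define Km where "Km = (\<Sum>d\<in>set ds. fst (KB d))"
  define n where "n = length ds"
  have Bm1: "Bm \<ge> 1" unfolding Bm_def using KB by (simp add: sum_nonneg)
  have Km0: "Km \<ge> 0" unfolding Km_def using KB by (simp add: sum_nonneg)
  have Bmd: "snd (KB d) \<le> Bm" if "d \<in> set ds" for d
  proof -
    have "snd (KB d) \<le> (\<Sum>d\<in>set ds. snd (KB d))"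
      using that KB by (intro member_le_sum) auto
    then show ?thesis unfolding Bm_def by simp
  qed
  have Kmd: "fst (KB d) \<le> Km" if "d \<in> set ds" for d
    unfolding Km_def using that KB by (intro member_le_sum) auto
  have Bn0: "Bm ^ n \<ge> 0" using Bm1 by simp
  show ?case
  proof (rule exI[of _ "real (R S) * (M * (real n * Bm ^ n * Km) + Bm ^ n)"],
      rule exI[of _ "real (R S) * (M * Bm ^ n)"], intro conjI allI impI)
    show "0 \<le> real (R S) * (M * (real n * Bm ^ n * Km) + Bm ^ n)"
      using M Bn0 Km0 by (intro mult_nonneg_nonneg add_nonneg_nonneg) auto
    show "0 \<le> real (R S) * (M * Bm ^ n)" using M Bn0 by simp
    fix \<theta> \<theta>' :: "nat set \<Rightarrow> nat \<Rightarrow> nat \<Rightarrow> real" and \<delta> :: real and q f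
    assume d0: "0 \<le> \<delta>"
      and h: "\<forall>(s', p')\<in>set (nodes_pc R P (Node ds)). \<forall>i<R (label s'). \<forall>j<p'.
        \<bar>\<theta> (label s') i j\<bar> \<le> M \<and> \<bar>\<theta>' (label s') i j\<bar> \<le> M \<and> \<bar>\<theta> (label s') i j - \<theta>' (label s') i j\<bar> \<le> \<delta>"
      and q: "q < P" and f: "\<forall>n\<in>set (leaves (Node ds)). f n < R {n}"
    have top: "\<bar>\<theta> S r' q\<bar> \<le> M \<and> \<bar>\<theta>' S r' q\<bar> \<le> M \<and> \<bar>\<theta> S r' q - \<theta>' S r' q\<bar> \<le> \<delta>" if "r' < R S" for r'
      using h q that unfolding S_def by simp
    have ch: "\<bar>tens R \<theta> d r' f\<bar> \<le> Bm \<and> \<bar>tens R \<theta>' d r' f\<bar> \<le> Bm \<and>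
        \<bar>tens R \<theta> d r' f - tens R \<theta>' d r' f\<bar> \<le> Km * \<delta>" if d: "d \<in> set ds" and r': "r' < R S" for d r'
    proof -
      have hd: "\<forall>(s', p')\<in>set (nodes_pc R (R S) d). \<forall>i<R (label s'). \<forall>j<p'.
        \<bar>\<theta> (label s') i j\<bar> \<le> M \<and> \<bar>\<theta>' (label s') i j\<bar> \<le> M \<and> \<bar>\<theta> (label s') i j - \<theta>' (label s') i j\<bar> \<le> \<delta>"
      proof (intro ballI allI impI, clarify)
        fix s' p' i j assume sp: "(s', p') \<in> set (nodes_pc R (R S) d)" and i: "i < R (label s')" and j: "j < p'"
        have "(s', p') \<in> set (nodes_pc R P (Node ds))" using sp d unfolding S_def by auto
        then show "\<bar>\<theta> (label s') i j\<bar> \<le> M \<and> \<bar>\<theta>' (label s') i j\<bar> \<le> M \<and> \<bar>\<theta> (label s') i j - \<theta>' (label s') i j\<bar> \<le> \<delta>"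
          using h i j by blast
      qed
      have hd': "\<forall>(s', p')\<in>set (nodes_pc R (R S) d). \<forall>i<R (label s'). \<forall>j<p'.
        \<bar>\<theta>' (label s') i j\<bar> \<le> M \<and> \<bar>\<theta> (label s') i j\<bar> \<le> M \<and> \<bar>\<theta>' (label s') i j - \<theta> (label s') i j\<bar> \<le> \<delta>"
        using hd by (auto simp: abs_minus_commute)
      have fd: "\<forall>n\<in>set (leaves d). f n < R {n}" using f d by auto
      have A: "\<bar>tens R \<theta> d r' f\<bar> \<le> snd (KB d) \<and> \<bar>tens R \<theta> d r' f - tens R \<theta>' d r' f\<bar> \<le> fst (KB d) * \<delta>"
        using conjunct2[OF conjunct2[OF bspec[OF KB d]], rule_format (no_asm), OF d0 hd r' fd] .
      have B: "\<bar>tens R \<theta>' d r' f\<bar> \<le> snd (KB d)"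
        using conjunct2[OF conjunct2[OF bspec[OF KB d]], rule_format (no_asm), OF d0 hd' r' fd] by blast
      have "fst (KB d) * \<delta> \<le> Km * \<delta>" using Kmd[OF d] d0 by (intro mult_right_mono) auto
      then show ?thesis using A B Bmd[OF d] by linarith
    qed
    have pl: "\<bar>prod_list (map (\<lambda>c. tens R \<theta> c r' f) ds)\<bar> \<le> Bm ^ n \<and>
      \<bar>prod_list (map (\<lambda>c. tens R \<theta>' c r' f) ds)\<bar> \<le> Bm ^ n \<and>
      \<bar>prod_list (map (\<lambda>c. tens R \<theta> c r' f) ds) - prod_list (map (\<lambda>c. tens R \<theta>' c r' f) ds)\<bar>
        \<le> real n * Bm ^ n * (Km * \<delta>)" if r': "r' < R S" for r'
      unfolding n_def
    proof (rule prod_list_lip[where g="\<lambda>c. tens R \<theta> c r' f" and h="\<lambda>c. tens R \<theta>' c r' f"])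
      show "1 \<le> Bm" by (rule Bm1)
      show "0 \<le> Km * \<delta>" using Km0 d0 by simp
      show "\<forall>d\<in>set ds. \<bar>tens R \<theta> d r' f\<bar> \<le> Bm \<and> \<bar>tens R \<theta>' d r' f\<bar> \<le> Bm \<and>
        \<bar>tens R \<theta> d r' f - tens R \<theta>' d r' f\<bar> \<le> Km * \<delta>" using ch[OF _ r'] by blast
    qed
    have trm: "\<bar>\<theta> S r' q * prod_list (map (\<lambda>c. tens R \<theta> c r' f) ds)\<bar> \<le> M * Bm ^ n \<and>
      \<bar>\<theta> S r' q * prod_list (map (\<lambda>c. tens R \<theta> c r' f) ds) - \<theta>' S r' q * prod_list (map (\<lambda>c. tens R \<theta>' c r' f) ds)\<bar>
       \<le> (M * (real n * Bm ^ n * Km) + Bm ^ n) * \<delta>" if r': "r' < R S" for r'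
    proof -
      let ?X = "prod_list (map (\<lambda>c. tens R \<theta> c r' f) ds)"
      let ?Y = "prod_list (map (\<lambda>c. tens R \<theta>' c r' f) ds)"
      have t: "\<bar>\<theta> S r' q\<bar> \<le> M" "\<bar>\<theta> S r' q - \<theta>' S r' q\<bar> \<le> \<delta>" using top[OF r'] by auto
      have p: "\<bar>?X\<bar> \<le> Bm ^ n" "\<bar>?Y\<bar> \<le> Bm ^ n" "\<bar>?X - ?Y\<bar> \<le> real n * Bm ^ n * (Km * \<delta>)"
        using pl[OF r'] by auto
      have b1: "\<bar>\<theta> S r' q * ?X\<bar> \<le> M * Bm ^ n"
        unfolding abs_mult by (rule mult_mono) (use t p M in auto)
      have "\<bar>\<theta> S r' q * ?X - \<theta>' S r' q * ?Y\<bar> \<le> \<bar>\<theta> S r' q\<bar> * \<bar>?X - ?Y\<bar> + \<bar>\<theta> S r' q - \<theta>' S r' q\<bar> * \<bar>?Y\<bar>"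
        by (rule abs_diff_prod)
      also have "\<dots> \<le> M * (real n * Bm ^ n * (Km * \<delta>)) + \<delta> * Bm ^ n"
      proof (rule add_mono)
        show "\<bar>\<theta> S r' q\<bar> * \<bar>?X - ?Y\<bar> \<le> M * (real n * Bm ^ n * (Km * \<delta>))"
          by (rule mult_mono) (use t p M in auto)
        show "\<bar>\<theta> S r' q - \<theta>' S r' q\<bar> * \<bar>?Y\<bar> \<le> \<delta> * Bm ^ n"
          by (rule mult_mono) (use t p d0 in auto)
      qed
      also have "\<dots> = (M * (real n * Bm ^ n * Km) + Bm ^ n) * \<delta>" by (simp add: algebra_simps)
      finally show ?thesis using b1 by simp
    qed
    have eqT: "tens R \<theta>0 (Node ds) q f = (\<Sum>r'<R S. \<theta>0 S r' q * prod_list (map (\<lambda>c. tens R \<theta>0 c r' f) ds))"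
      for \<theta>0 by (simp only: tens.simps S_def)
    have "\<bar>tens R \<theta> (Node ds) q f\<bar> \<le> (\<Sum>r'<R S. \<bar>\<theta> S r' q * prod_list (map (\<lambda>c. tens R \<theta> c r' f) ds)\<bar>)"
      unfolding eqT by (rule sum_abs)
    also have "\<dots> \<le> real (card {..<R S}) * (M * Bm ^ n)"
      by (rule sum_bounded_above) (use trm in auto)
    finally show "\<bar>tens R \<theta> (Node ds) q f\<bar> \<le> real (R S) * (M * Bm ^ n)" by simp
    have "\<bar>tens R \<theta> (Node ds) q f - tens R \<theta>' (Node ds) q f\<bar> \<le>
      (\<Sum>r'<R S. \<bar>\<theta> S r' q * prod_list (map (\<lambda>c. tens R \<theta> c r' f) ds) - \<theta>' S r' q * prod_list (map (\<lambda>c. tens R \<theta>' c r' f) ds)\<bar>)"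
      unfolding eqT sum_subtractf[symmetric] by (rule sum_abs)
    also have "\<dots> \<le> real (card {..<R S}) * ((M * (real n * Bm ^ n * Km) + Bm ^ n) * \<delta>)"
      by (rule sum_bounded_above) (use trm in auto)
    finally show "\<bar>tens R \<theta> (Node ds) q f - tens R \<theta>' (Node ds) q f\<bar> \<le>
        real (R S) * (M * (real n * Bm ^ n * Km) + Bm ^ n) * \<delta>" by (simp add: mult.assoc)
  qed
qed

lemma deriv_affine_L:
  fixes L :: "'a::euclidean_space \<Rightarrow> real"
  assumes "L differentiable (at (A + x0 *\<^sub>R B))"
  shows "deriv (\<lambda>x. L (A + x *\<^sub>R B)) x0 = frechet_derivative L (at (A + x0 *\<^sub>R B)) B"
proof -
  define F where "F = frechet_derivative L (at (A + x0 *\<^sub>R B))"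
  have dL: "(L has_derivative F) (at (A + x0 *\<^sub>R B))"
    using assms unfolding F_def by (simp add: frechet_derivative_works)
  have lin: "linear F" using dL by (rule has_derivative_linear)
  have da: "((\<lambda>x. A + x *\<^sub>R B) has_derivative (\<lambda>h. h *\<^sub>R B)) (at x0)"
    by (auto intro!: derivative_eq_intros)
  have "((\<lambda>x. L (A + x *\<^sub>R B)) has_derivative (\<lambda>h. F (h *\<^sub>R B))) (at x0)"
    by (rule has_derivative_compose[OF da dL])
  moreover have "(\<lambda>h. F (h *\<^sub>R B)) = (*) (F B)"
    using linear_scale[OF lin] by (auto simp: fun_eq_iff)
  ultimately have "((\<lambda>x. L (A + x *\<^sub>R B)) has_real_derivative F B) (at x0)"
    unfolding has_field_derivative_def by simp
  then show ?thesis unfolding F_def by (rule DERIV_imp_deriv)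
qed

lemma frechet_grad:
  fixes L :: "'a::euclidean_space \<Rightarrow> real"
  assumes "L differentiable (at y)"
  shows "\<bar>frechet_derivative L (at y) v\<bar> \<le> norm (grad L y) * norm v"
proof -
  define F where "F = frechet_derivative L (at y)"
  have lin: "linear F" using assms unfolding F_def by (rule linear_frechet_derivative)
  have "F v = F (\<Sum>b\<in>Basis. (v \<bullet> b) *\<^sub>R b)" by (simp add: euclidean_representation)
  also have "\<dots> = (\<Sum>b\<in>Basis. (v \<bullet> b) * F b)"
    by (simp add: linear_sum[OF lin] linear_scale[OF lin])
  also have "\<dots> = v \<bullet> grad L y"
    unfolding grad_def F_def by (simp add: inner_sum_right mult.commute)
  finally have "F v = v \<bullet> grad L y" .
  then show ?thesis unfolding F_def using Cauchy_Schwarz_ineq2[of v "grad L y"] by (simp add: mult.commute)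
qed

lemma finite_unif_bound:
  fixes h :: "'a \<Rightarrow> real \<Rightarrow> real"
  assumes "finite A" "\<forall>a\<in>A. \<exists>B. \<forall>t\<in>S. \<bar>h a t\<bar> \<le> B"
  shows "\<exists>B. \<forall>a\<in>A. \<forall>t\<in>S. \<bar>h a t\<bar> \<le> B"
  using assms
proof (induction A rule: finite_induct)
  case empty then show ?case by simp
next
  case (insert a A)
  then obtain B1 where B1: "\<forall>t\<in>S. \<bar>h a t\<bar> \<le> B1" by blast
  from insert obtain B2 where B2: "\<forall>a\<in>A. \<forall>t\<in>S. \<bar>h a t\<bar> \<le> B2" by blast
  show ?case
    by (rule exI[of _ "max B1 B2"]) (use B1 B2 in fastforce)
qed

lemma upd_apply: "upd \<theta> \<mu> i j x \<mu>' a b = (if \<mu>' = \<mu> \<and> a = i \<and> b = j then x else \<theta> \<mu>' a b)"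
  unfolding upd_def by auto

lemma upd_same: "upd \<theta> \<mu> i j (\<theta> \<mu> i j) = \<theta>"
  unfolding upd_def by auto

lemma label_child_ne:
  assumes "wft (Node ds)" "d \<in> set ds" "x \<in> set (subtrees d)"
  shows "label x \<noteq> label (Node ds)"
proof -
  have "label x \<subseteq> label d" by (rule subtrees_label[OF assms(3)])
  moreover have "label d \<subseteq> label (Node ds)" using assms(2) by auto
  moreover have "label d \<noteq> label (Node ds)" using wft_child[OF assms(1,2)] by blast
  ultimately show ?thesis by blast
qed

lemma tens_base:
  assumes wu: "wft u"
    and agree: "\<forall>x\<in>set (subtrees u). label x \<noteq> label u \<longrightarrow> \<theta>1 (label x) = \<theta>3 (label x) \<and> \<theta>2 (label x) = \<theta>3 (label x)"
    and ent: "\<forall>a. \<theta>3 (label u) a q = \<alpha> * \<theta>1 (label u) a q + \<beta> * \<theta>2 (label u) a q"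
  shows "tens R \<theta>3 u q f = \<alpha> * tens R \<theta>1 u q f + \<beta> * tens R \<theta>2 u q f"
proof (cases u)
  case (Leaf n)
  then show ?thesis using ent by simp
next
  case (Node ds)
  define S where "S = label (Node ds)"
  have ch: "tens R \<theta>1 d r' f = tens R \<theta>3 d r' f \<and> tens R \<theta>2 d r' f = tens R \<theta>3 d r' f"
    if d: "d \<in> set ds" for d r'
  proof -
    have "\<forall>x\<in>set (subtrees d). \<theta>1 (label x) = \<theta>3 (label x) \<and> \<theta>2 (label x) = \<theta>3 (label x)"
    proof
      fix x assume x: "x \<in> set (subtrees d)"
      have "label x \<noteq> label u" using label_child_ne[OF wu[unfolded Node] d x] Node by simp
      moreover have "x \<in> set (subtrees u)" using Node d x by auto
      ultimately show "\<theta>1 (label x) = \<theta>3 (label x) \<and> \<theta>2 (label x) = \<theta>3 (label x)" using agree by blast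
    qed
    then show ?thesis by (auto intro: tens_cong)
  qed
  have m1: "map (\<lambda>c. tens R \<theta>1 c r' f) ds = map (\<lambda>c. tens R \<theta>3 c r' f) ds" for r'
    using ch by (intro map_cong) auto
  have m2: "map (\<lambda>c. tens R \<theta>2 c r' f) ds = map (\<lambda>c. tens R \<theta>3 c r' f) ds" for r'
    using ch by (intro map_cong) auto
  have e: "\<theta>3 S a q = \<alpha> * \<theta>1 S a q + \<beta> * \<theta>2 S a q" for a using ent Node S_def by simp
  have "tens R \<theta>3 u q f = (\<Sum>r'<R S. \<theta>3 S r' q * prod_list (map (\<lambda>c. tens R \<theta>3 c r' f) ds))"
    unfolding Node by (simp only: tens.simps S_def)
  also have "\<dots> = (\<Sum>r'<R S. \<alpha> * (\<theta>1 S r' q * prod_list (map (\<lambda>c. tens R \<theta>3 c r' f) ds)) +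
       \<beta> * (\<theta>2 S r' q * prod_list (map (\<lambda>c. tens R \<theta>3 c r' f) ds)))"
    by (rule sum.cong[OF refl]) (simp add: e algebra_simps)
  also have "\<dots> = \<alpha> * (\<Sum>r'<R S. \<theta>1 S r' q * prod_list (map (\<lambda>c. tens R \<theta>1 c r' f) ds)) +
       \<beta> * (\<Sum>r'<R S. \<theta>2 S r' q * prod_list (map (\<lambda>c. tens R \<theta>2 c r' f) ds))"
    by (simp add: m1 m2 sum.distrib sum_distrib_left)
  also have "\<dots> = \<alpha> * tens R \<theta>1 u q f + \<beta> * tens R \<theta>2 u q f"
    unfolding Node by (simp only: tens.simps S_def)
  finally show ?thesis .
qed

lemma tens_upd_affine:
  assumes wT: "wft T" and u: "(u, P') \<in> set (nodes_pc R P T)" and q: "q < P"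
  shows "tens R (upd \<theta> (label u) i j x) T q f =
    (1 - x) * tens R (upd \<theta> (label u) i j 0) T q f + x * tens R (upd \<theta> (label u) i j 1) T q f"
proof (rule tens_lin[OF wT u _ _ q])
  show "\<forall>\<mu>. \<mu> \<notin> label ` set (subtrees u) \<longrightarrow>
      upd \<theta> (label u) i j 0 \<mu> = upd \<theta> (label u) i j x \<mu> \<and> upd \<theta> (label u) i j 1 \<mu> = upd \<theta> (label u) i j x \<mu>"
    using subtree_self[of u] unfolding upd_def by auto
  have wu: "wft u" using wft_sub[OF wT nodes_sub[OF u]] .
  show "\<forall>q<P'. tens R (upd \<theta> (label u) i j x) u q f =
      (1 - x) * tens R (upd \<theta> (label u) i j 0) u q f + x * tens R (upd \<theta> (label u) i j 1) u q f"
  proof (intro allI impI)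
    fix q' assume "q' < P'"
    show "tens R (upd \<theta> (label u) i j x) u q' f =
      (1 - x) * tens R (upd \<theta> (label u) i j 0) u q' f + x * tens R (upd \<theta> (label u) i j 1) u q' f"
    proof (rule tens_base[OF wu])
      show "\<forall>y\<in>set (subtrees u). label y \<noteq> label u \<longrightarrow>
        upd \<theta> (label u) i j 0 (label y) = upd \<theta> (label u) i j x (label y) \<and>
        upd \<theta> (label u) i j 1 (label y) = upd \<theta> (label u) i j x (label y)"
        unfolding upd_def by auto
      show "\<forall>a. upd \<theta> (label u) i j x (label u) a q' =
        (1 - x) * upd \<theta> (label u) i j 0 (label u) a q' + x * upd \<theta> (label u) i j 1 (label u) a q'"
        unfolding upd_apply by (simp add: algebra_simps)
    qed
  qed
qed

lemma tens_col_zero: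
  assumes "\<forall>i<R (label c). \<theta> (label c) i r = 0" "\<forall>n\<in>set (leaves c). f n < R {n}"
  shows "tens R \<theta> c r f = 0"
proof (cases c)
  case (Leaf n) then show ?thesis using assms by simp
next
  case (Node ds) then show ?thesis using assms by (simp del: label.simps)
qed


lemma sib_label_ne:
  assumes w: "wft (Node cs)" and c: "c \<in> set cs" and c0: "c0 \<in> set cs" and ne: "c \<noteq> c0"
    and x: "x \<in> set (subtrees c)"
  shows "label x \<noteq> label c0"
proof
  assume eq: "label x = label c0"
  obtain xs ys where cs: "cs = xs @ c0 # ys" using split_list[OF c0] by blast
  have "c \<in> set xs \<union> set ys" using c ne cs by auto
  then have disj: "label c0 \<inter> label c = {}" using wft_split[OF w cs] by blast
  have "wft x" using wft_sub[OF conjunct1[OF wft_child[OF w c]] x] .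
  then have "label x \<noteq> {}" by (rule wft_ne)
  moreover have "label x \<subseteq> label c" by (rule subtrees_label[OF x])
  ultimately show False using disj eq by blast
qed

lemma leaves_sub:
  assumes "x \<in> set (subtrees T)" shows "set (leaves x) \<subseteq> set (leaves T)"
  using subtrees_label[OF assms] unfolding label_leaves .

lemma vanish_row:
  assumes wT: "wft T" and nu: "(Node cs, p) \<in> set (nodes_pc R 1 T)"
    and z: "\<forall>c\<in>set cs. \<forall>i<R (label c). \<theta>z (label c) i r = 0"
    and f: "\<forall>n\<in>set (leaves T). f n < R {n}"
  shows "tens R (upd \<theta>z (label (Node cs)) r jj 1) T 0 f = tens R (upd \<theta>z (label (Node cs)) r jj 0) T 0 f"
proof -
  define V where "V = label (Node cs)"
  define \<theta>a where "\<theta>a = upd \<theta>z V r jj 1"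
  define \<theta>b where "\<theta>b = upd \<theta>z V r jj 0"
  have w0: "wft (Node cs)" using wft_sub[OF wT nodes_sub[OF nu]] .
  have csne: "cs \<noteq> []" using w0 unfolding wft_def using subtree_self[of "Node cs"] by blast
  have chc: "tens R \<theta>a c r' f = tens R \<theta>z c r' f \<and> tens R \<theta>b c r' f = tens R \<theta>z c r' f"
    if c: "c \<in> set cs" for c r'
  proof -
    have "\<forall>x\<in>set (subtrees c). \<theta>a (label x) = \<theta>z (label x) \<and> \<theta>b (label x) = \<theta>z (label x)"
      using label_child_ne[OF w0 c] unfolding \<theta>a_def \<theta>b_def V_def upd_def by auto
    then show ?thesis by (auto intro: tens_cong)
  qed
  have zc: "tens R \<theta>z c r f = 0" if c: "c \<in> set cs" for c
  proof (rule tens_col_zero)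
    show "\<forall>i<R (label c). \<theta>z (label c) i r = 0" using z c by blast
    have "c \<in> set (subtrees T)" using nodes_sub[OF nodes_child[OF nu c]] .
    then show "\<forall>n\<in>set (leaves c). f n < R {n}" using leaves_sub f by blast
  qed
  have PP0: "prod_list (map (\<lambda>c. tens R \<theta>z c r f) cs) = 0"
  proof -
    obtain c where c: "c \<in> set cs" using csne by (cases cs) auto
    then have "0 \<in> set (map (\<lambda>c. tens R \<theta>z c r f) cs)" using zc[OF c] by force
    then show ?thesis by (simp add: prod_list_zero_iff)
  qed
  have ma: "map (\<lambda>c. tens R \<theta>a c r' f) cs = map (\<lambda>c. tens R \<theta>z c r' f) cs" for r'
    using chc by (intro map_cong) auto
  have mb: "map (\<lambda>c. tens R \<theta>b c r' f) cs = map (\<lambda>c. tens R \<theta>z c r' f) cs" for r'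
    using chc by (intro map_cong) auto
  have base: "tens R \<theta>a (Node cs) q f = tens R \<theta>b (Node cs) q f" for q
  proof -
    have "tens R \<theta>a (Node cs) q f = (\<Sum>r'<R V. \<theta>a V r' q * prod_list (map (\<lambda>c. tens R \<theta>z c r' f) cs))"
      by (simp only: tens.simps V_def[symmetric] ma)
    also have "\<dots> = (\<Sum>r'<R V. \<theta>b V r' q * prod_list (map (\<lambda>c. tens R \<theta>z c r' f) cs))"
    proof (rule sum.cong[OF refl])
      fix r' show "\<theta>a V r' q * prod_list (map (\<lambda>c. tens R \<theta>z c r' f) cs) =
          \<theta>b V r' q * prod_list (map (\<lambda>c. tens R \<theta>z c r' f) cs)"
        by (cases "r' = r") (auto simp: PP0 \<theta>a_def \<theta>b_def upd_apply)
    qed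
    also have "\<dots> = tens R \<theta>b (Node cs) q f"
      by (simp only: tens.simps V_def[symmetric] mb)
    finally show ?thesis .
  qed
  have "tens R \<theta>a T 0 f = 1 * tens R \<theta>b T 0 f + 0 * tens R \<theta>a T 0 f"
  proof (rule tens_lin[OF wT nu])
    show "\<forall>\<mu>. \<mu> \<notin> label ` set (subtrees (Node cs)) \<longrightarrow> \<theta>b \<mu> = \<theta>a \<mu> \<and> \<theta>a \<mu> = \<theta>a \<mu>"
      using subtree_self[of "Node cs"] unfolding \<theta>a_def \<theta>b_def V_def upd_def by auto
    show "\<forall>q<p. tens R \<theta>a (Node cs) q f = 1 * tens R \<theta>b (Node cs) q f + 0 * tens R \<theta>a (Node cs) q f"
      using base by simp
  qed simp
  then show ?thesis unfolding \<theta>a_def \<theta>b_def V_def by simp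
qed

lemma vanish_col:
  assumes wT: "wft T" and nu: "(Node cs, p) \<in> set (nodes_pc R 1 T)" and c0: "c0 \<in> set cs"
    and z: "\<forall>q<p. \<theta>z (label (Node cs)) r q = 0"
  shows "tens R (upd \<theta>z (label c0) ii r 1) T 0 f = tens R (upd \<theta>z (label c0) ii r 0) T 0 f"
proof -
  define V where "V = label (Node cs)"
  define \<theta>a where "\<theta>a = upd \<theta>z (label c0) ii r 1"
  define \<theta>b where "\<theta>b = upd \<theta>z (label c0) ii r 0"
  have w0: "wft (Node cs)" using wft_sub[OF wT nodes_sub[OF nu]] .
  have c0V: "label c0 \<noteq> V" using wft_child[OF w0 c0] V_def by auto
  have chc: "tens R \<theta>x c r' f = tens R \<theta>z c r' f"
    if c: "c \<in> set cs" and r': "r' \<noteq> r" and thx: "\<theta>x = \<theta>a \<or> \<theta>x = \<theta>b" for c r' \<theta>x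
  proof -
    have wc: "wft c" using wft_child[OF w0 c] by blast
    have "tens R \<theta>x c r' f = 1 * tens R \<theta>z c r' f + 0 * tens R \<theta>z c r' f"
    proof (rule tens_base[OF wc])
      show "\<forall>x\<in>set (subtrees c). label x \<noteq> label c \<longrightarrow> \<theta>z (label x) = \<theta>x (label x) \<and> \<theta>z (label x) = \<theta>x (label x)"
      proof (intro ballI impI)
        fix x assume x: "x \<in> set (subtrees c)" and ne: "label x \<noteq> label c"
        have "label x \<noteq> label c0"
          using sib_label_ne[OF w0 c c0 _ x] ne by (cases "c = c0") auto
        then show "\<theta>z (label x) = \<theta>x (label x) \<and> \<theta>z (label x) = \<theta>x (label x)"
          using thx unfolding \<theta>a_def \<theta>b_def upd_def by (elim disjE) simp_all
      qed
      show "\<forall>a. \<theta>x (label c) a r' = 1 * \<theta>z (label c) a r' + 0 * \<theta>z (label c) a r'"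
        using thx r' unfolding \<theta>a_def \<theta>b_def upd_apply by auto
    qed
    then show ?thesis by simp
  qed
  have base: "tens R \<theta>a (Node cs) q f = tens R \<theta>b (Node cs) q f" if q: "q < p" for q
  proof -
    have "tens R \<theta>a (Node cs) q f = (\<Sum>r'<R V. \<theta>a V r' q * prod_list (map (\<lambda>c. tens R \<theta>a c r' f) cs))"
      by (simp only: tens.simps V_def[symmetric])
    also have "\<dots> = (\<Sum>r'<R V. \<theta>b V r' q * prod_list (map (\<lambda>c. tens R \<theta>b c r' f) cs))"
    proof (rule sum.cong[OF refl])
      fix r'
      show "\<theta>a V r' q * prod_list (map (\<lambda>c. tens R \<theta>a c r' f) cs) =
          \<theta>b V r' q * prod_list (map (\<lambda>c. tens R \<theta>b c r' f) cs)"
      proof (cases "r' = r")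
        case True
        have "\<theta>a V r' q = 0" "\<theta>b V r' q = 0"
          using z q True c0V unfolding \<theta>a_def \<theta>b_def upd_apply V_def by auto
        then show ?thesis by simp
      next
        case False
        have m: "map (\<lambda>c. tens R \<theta>a c r' f) cs = map (\<lambda>c. tens R \<theta>b c r' f) cs"
          using chc[OF _ False] by (intro map_cong) auto
        have t: "\<theta>a V r' q = \<theta>b V r' q"
          using c0V unfolding \<theta>a_def \<theta>b_def upd_apply by auto
        show ?thesis by (simp only: m t)
      qed
    qed
    also have "\<dots> = tens R \<theta>b (Node cs) q f"
      by (simp only: tens.simps V_def[symmetric])
    finally show ?thesis .
  qed
  have "tens R \<theta>a T 0 f = 1 * tens R \<theta>b T 0 f + 0 * tens R \<theta>a T 0 f"
  proof (rule tens_lin[OF wT nu])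
    have "c0 \<in> set (subtrees (Node cs))" using c0 subtree_self[of c0] by auto
    then show "\<forall>\<mu>. \<mu> \<notin> label ` set (subtrees (Node cs)) \<longrightarrow> \<theta>b \<mu> = \<theta>a \<mu> \<and> \<theta>a \<mu> = \<theta>a \<mu>"
      unfolding \<theta>a_def \<theta>b_def upd_def by auto
    show "\<forall>q<p. tens R \<theta>a (Node cs) q f = 1 * tens R \<theta>b (Node cs) q f + 0 * tens R \<theta>a (Node cs) q f"
      using base by simp
  qed simp
  then show ?thesis unfolding \<theta>a_def \<theta>b_def by simp
qed

definition isLC :: "(nat set \<Rightarrow> nat) \<Rightarrow> mtree list \<Rightarrow> nat \<Rightarrow> nat \<Rightarrow> nat set \<Rightarrow> nat \<Rightarrow> nat \<Rightarrow> bool" where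
  "isLC R cs p r \<mu> i j \<longleftrightarrow> (\<mu> = label (Node cs) \<and> i = r \<and> j < p) \<or> (\<exists>c\<in>set cs. \<mu> = label c \<and> i < R \<mu> \<and> j = r)"

definition zeroLC :: "(nat set \<Rightarrow> nat) \<Rightarrow> mtree list \<Rightarrow> nat \<Rightarrow> nat \<Rightarrow> (nat set \<Rightarrow> nat \<Rightarrow> nat \<Rightarrow> real)
   \<Rightarrow> (nat set \<Rightarrow> nat \<Rightarrow> nat \<Rightarrow> real)" where
  "zeroLC R cs p r \<theta> = (\<lambda>\<mu> i j. if isLC R cs p r \<mu> i j then 0 else \<theta> \<mu> i j)"

lemma lip_hyp:
  assumes M1: "M \<ge> 1"
    and hM: "\<forall>(s', p')\<in>set (nodes_pc R 1 T). \<forall>a<R (label s'). \<forall>b<p'. \<bar>\<theta> (label s') a b\<bar> \<le> M"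
    and hd: "\<forall>\<mu> a b. isLC R cs p r \<mu> a b \<longrightarrow> \<bar>\<theta> \<mu> a b\<bar> \<le> \<delta>" and d0: "\<delta> \<ge> 0"
    and x: "\<bar>x\<bar> \<le> 1"
  shows "\<forall>(s', p')\<in>set (nodes_pc R 1 T). \<forall>a<R (label s'). \<forall>b<p'.
     \<bar>upd \<theta> \<mu> i j x (label s') a b\<bar> \<le> M \<and> \<bar>upd (zeroLC R cs p r \<theta>) \<mu> i j x (label s') a b\<bar> \<le> M \<and>
     \<bar>upd \<theta> \<mu> i j x (label s') a b - upd (zeroLC R cs p r \<theta>) \<mu> i j x (label s') a b\<bar> \<le> \<delta>"
proof (intro ballI allI impI, clarify)
  fix s' p' a b assume sp: "(s', p') \<in> set (nodes_pc R 1 T)" and a: "a < R (label s')" and b: "b < p'"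
  have tb: "\<bar>\<theta> (label s') a b\<bar> \<le> M" using hM sp a b by blast
  show "\<bar>upd \<theta> \<mu> i j x (label s') a b\<bar> \<le> M \<and> \<bar>upd (zeroLC R cs p r \<theta>) \<mu> i j x (label s') a b\<bar> \<le> M \<and>
     \<bar>upd \<theta> \<mu> i j x (label s') a b - upd (zeroLC R cs p r \<theta>) \<mu> i j x (label s') a b\<bar> \<le> \<delta>"
  proof (cases "label s' = \<mu> \<and> a = i \<and> b = j")
    case True
    then show ?thesis using x M1 d0 by (simp add: upd_apply)
  next
    case False
    show ?thesis
    proof (cases "isLC R cs p r (label s') a b")
      case True
      then have "\<bar>\<theta> (label s') a b\<bar> \<le> \<delta>" using hd by blast
      then show ?thesis using False True tb M1 by (auto simp add: upd_apply zeroLC_def)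
    next
      case False2: False
      then show ?thesis using False tb d0 by (auto simp add: upd_apply zeroLC_def)
    qed
  qed
qed

lemma key_bound:
  fixes L :: "real^'i::finite \<Rightarrow> real" and idx :: "'i \<Rightarrow> nat \<Rightarrow> nat"
  assumes wT: "wft T" and nu: "(Node cs, p) \<in> set (nodes_pc R 1 T)"
    and Ldiff: "\<forall>x. L differentiable (at x)"
    and fval: "\<forall>k. \<forall>n\<in>set (leaves T). idx k n < R {n}"
    and lip: "\<forall>\<theta> \<theta>' \<delta> q f. \<delta> \<ge> 0 \<longrightarrow>
     (\<forall>(s', p')\<in>set (nodes_pc R 1 T). \<forall>i<R (label s'). \<forall>j<p'.
        \<bar>\<theta> (label s') i j\<bar> \<le> M \<and> \<bar>\<theta>' (label s') i j\<bar> \<le> M \<and> \<bar>\<theta> (label s') i j - \<theta>' (label s') i j\<bar> \<le> \<delta>) \<longrightarrow>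
     q < 1 \<longrightarrow> (\<forall>n\<in>set (leaves T). f n < R {n}) \<longrightarrow>
     \<bar>tens R \<theta> T q f\<bar> \<le> Bt \<and> \<bar>tens R \<theta> T q f - tens R \<theta>' T q f\<bar> \<le> K * \<delta>"
    and M1: "M \<ge> 1"
    and hM: "\<forall>(s', p')\<in>set (nodes_pc R 1 T). \<forall>a<R (label s'). \<forall>b<p'. \<bar>\<theta> (label s') a b\<bar> \<le> M"
    and hd: "\<forall>\<mu> a b. isLC R cs p r \<mu> a b \<longrightarrow> \<bar>\<theta> \<mu> a b\<bar> \<le> \<delta>" and d0: "\<delta> \<ge> 0"
    and e: "isLC R cs p r \<mu> i j"
  shows "\<bar>deriv (\<lambda>x. phiH L idx R T (upd \<theta> \<mu> i j x)) (\<theta> \<mu> i j)\<bar>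
     \<le> norm (grad L (end_tensor idx R T \<theta>)) * (real CARD('i) * (2 * K * \<delta>))"
proof -
  define \<theta>0 where "\<theta>0 = zeroLC R cs p r \<theta>"
  define V where "V = label (Node cs)"
  have aff: "tens R (upd \<theta> \<mu> i j x) T 0 f =
    (1 - x) * tens R (upd \<theta> \<mu> i j 0) T 0 f + x * tens R (upd \<theta> \<mu> i j 1) T 0 f" for x f
  proof -
    from e consider "\<mu> = V" | c where "c \<in> set cs" "\<mu> = label c"
      unfolding isLC_def V_def by blast
    then show ?thesis
    proof cases
      case 1 then show ?thesis using tens_upd_affine[OF wT nu zero_less_one] V_def by blast
    next
      case 2
      have "(c, R V) \<in> set (nodes_pc R 1 T)" using nodes_child[OF nu 2(1)] V_def by simp
      then show ?thesis using tens_upd_affine[OF wT _ zero_less_one] 2(2) by blast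
    qed
  qed
  have van: "tens R (upd \<theta>0 \<mu> i j 1) T 0 f = tens R (upd \<theta>0 \<mu> i j 0) T 0 f"
    if f: "\<forall>n\<in>set (leaves T). f n < R {n}" for f
  proof -
    from e consider "\<mu> = V" "i = r" | c where "c \<in> set cs" "\<mu> = label c" "j = r"
      unfolding isLC_def V_def by blast
    then show ?thesis
    proof cases
      case 1
      have "\<forall>c\<in>set cs. \<forall>i<R (label c). \<theta>0 (label c) i r = 0"
        unfolding \<theta>0_def zeroLC_def isLC_def by auto
      from vanish_row[where r=r and f=f and jj=j and R=R and \<theta>z=\<theta>0 and T=T and cs=cs, OF wT nu this f] show ?thesis using 1 V_def by simp
    next
      case 2
      have "\<forall>q<p. \<theta>0 (label (Node cs)) r q = 0"
        unfolding \<theta>0_def zeroLC_def isLC_def by auto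
      from vanish_col[where r=r and f=f and ii=i and R=R and \<theta>z=\<theta>0 and T=T and cs=cs, OF wT nu 2(1) this] show ?thesis using 2 by simp
    qed
  qed
  define A where "A = end_tensor idx R T (upd \<theta> \<mu> i j 0)"
  define Bv where "Bv = end_tensor idx R T (upd \<theta> \<mu> i j 1) - A"
  have endx: "end_tensor idx R T (upd \<theta> \<mu> i j x) = A + x *\<^sub>R Bv" for x
    unfolding A_def Bv_def end_tensor_def vec_eq_iff using aff by (simp add: algebra_simps)
  have ph: "(\<lambda>x. phiH L idx R T (upd \<theta> \<mu> i j x)) = (\<lambda>x. L (A + x *\<^sub>R Bv))"
    unfolding phiH_def endx ..
  have y: "A + (\<theta> \<mu> i j) *\<^sub>R Bv = end_tensor idx R T \<theta>"
    using endx[of "\<theta> \<mu> i j"] upd_same[of \<theta> \<mu> i j] by simp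
  have dv: "deriv (\<lambda>x. phiH L idx R T (upd \<theta> \<mu> i j x)) (\<theta> \<mu> i j) =
      frechet_derivative L (at (end_tensor idx R T \<theta>)) Bv"
    unfolding ph using deriv_affine_L[of L A "\<theta> \<mu> i j" Bv] Ldiff y by simp
  have comp: "\<bar>Bv $ k\<bar> \<le> 2 * K * \<delta>" for k
  proof -
    define f where "f = idx k"
    have fv: "\<forall>n\<in>set (leaves T). f n < R {n}" using fval f_def by blast
    have l1: "\<bar>tens R (upd \<theta> \<mu> i j 1) T 0 f - tens R (upd \<theta>0 \<mu> i j 1) T 0 f\<bar> \<le> K * \<delta>"
      using lip d0 lip_hyp[OF M1 hM hd d0, of 1 \<mu> i j] fv unfolding \<theta>0_def by auto
    have l0: "\<bar>tens R (upd \<theta> \<mu> i j 0) T 0 f - tens R (upd \<theta>0 \<mu> i j 0) T 0 f\<bar> \<le> K * \<delta>"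
      using lip d0 lip_hyp[OF M1 hM hd d0, of 0 \<mu> i j] fv unfolding \<theta>0_def by auto
    have "Bv $ k = tens R (upd \<theta> \<mu> i j 1) T 0 f - tens R (upd \<theta> \<mu> i j 0) T 0 f"
      unfolding Bv_def A_def end_tensor_def f_def by simp
    then show ?thesis using l1 l0 van[OF fv] by linarith
  qed
  have nB: "norm Bv \<le> real CARD('i) * (2 * K * \<delta>)"
  proof -
    have "norm Bv \<le> (\<Sum>k\<in>UNIV. \<bar>Bv $ k\<bar>)" by (rule norm_le_l1_cart)
    also have "\<dots> \<le> real (card (UNIV::'i set)) * (2 * K * \<delta>)"
      by (rule sum_bounded_above) (use comp in auto)
    finally show ?thesis by simp
  qed
  have "\<bar>frechet_derivative L (at (end_tensor idx R T \<theta>)) Bv\<bar> \<le> norm (grad L (end_tensor idx R T \<theta>)) * norm Bv"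
    using frechet_grad Ldiff by blast
  also have "\<dots> \<le> norm (grad L (end_tensor idx R T \<theta>)) * (real CARD('i) * (2 * K * \<delta>))"
    by (rule mult_left_mono[OF nB]) simp
  finally show ?thesis unfolding dv .
qed

lemma abs_sum_le_card:
  fixes f :: "'a \<Rightarrow> real"
  assumes "\<forall>a\<in>A. \<bar>f a\<bar> \<le> c"
  shows "\<bar>sum f A\<bar> \<le> real (card A) * c"
proof -
  have "\<bar>sum f A\<bar> \<le> (\<Sum>a\<in>A. \<bar>f a\<bar>)" by (rule sum_abs)
  also have "\<dots> \<le> real (card A) * c" by (rule sum_bounded_above) (use assms in auto)
  finally show ?thesis .
qed

lemma cont_bound:
  fixes g :: "real \<Rightarrow> real"
  assumes "continuous_on {a..b} g"
  shows "\<exists>B. \<forall>t\<in>{a..b}. \<bar>g t\<bar> \<le> B"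
proof -
  have "compact (g ` {a..b})" by (rule compact_continuous_image[OF assms compact_Icc])
  then have "bounded (g ` {a..b})" by (rule compact_imp_bounded)
  then obtain B where "\<forall>y\<in>g ` {a..b}. norm y \<le> B" unfolding bounded_iff by blast
  then show ?thesis by auto
qed

lemma grad_bound:
  fixes L :: "'a::euclidean_space \<Rightarrow> real"
  assumes "\<forall>K. compact K \<longrightarrow> (\<exists>C. lipschitz_on C K (grad L))"
  shows "\<exists>G0\<ge>0. \<forall>y\<in>cball 0 \<rho>. norm (grad L y) \<le> G0"
proof -
  obtain C where "lipschitz_on C (cball 0 \<rho>) (grad L)" using assms compact_cball by blast
  then have "continuous_on (cball 0 \<rho>) (grad L)" by (rule lipschitz_on_continuous_on)
  then have "compact (grad L ` cball 0 \<rho>)" by (rule compact_continuous_image[OF _ compact_cball])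
  then have "bounded (grad L ` cball 0 \<rho>)" by (rule compact_imp_bounded)
  then obtain B where B: "\<forall>y\<in>grad L ` cball 0 \<rho>. norm y \<le> B" unfolding bounded_iff by blast
  show ?thesis by (rule exI[of _ "max B 0"]) (use B in auto)
qed


theorem lemma14:
  fixes N :: nat and D :: "nat \<Rightarrow> nat" and T :: mtree and R :: "nat set \<Rightarrow> nat"
    and idx :: "'i::finite \<Rightarrow> nat \<Rightarrow> nat"
    and L :: "real^'i \<Rightarrow> real"
    and \<Theta> :: "real \<Rightarrow> nat set \<Rightarrow> nat \<Rightarrow> nat \<Rightarrow> real"
    and cs :: "mtree list" and p r :: nat and t0 :: real
  assumes N_pos: "N \<ge> 1"
    and D_pos: "\<forall>n\<in>{1..N}. D n \<ge> 1"
    and tree: "mode_tree N T"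
    and R_int: "\<forall>cs'. Node cs' \<in> set (subtrees T) \<longrightarrow> R (label (Node cs')) \<ge> 1"
    and R_leaf: "\<forall>n\<in>{1..N}. R {n} = D n"
    and idx_bij: "bij_betw idx UNIV (idx_set N D)"
    and L_nonneg: "\<forall>x. L x \<ge> 0"
    and L_diff: "\<forall>x. L differentiable (at x)"
    and L_smooth: "\<forall>K. compact K \<longrightarrow> (\<exists>C. lipschitz_on C K (grad L))"
    and flow: "gradient_flow L idx R T \<Theta>"
    and nu: "(Node cs, p) \<in> set (nodes_pc R 1 T)"
    and r: "r < R (label (Node cs))"
    and t0: "t0 \<ge> 0" "LC_zero R (\<Theta> t0) cs p r"
  shows "\<forall>t\<ge>0. LC_zero R (\<Theta> t) cs p r"
proof -
  define V where "V = label (Node cs)"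
  have wT: "wft T"
  proof -
    have "distinct (leaves T)"
      using tree unfolding mode_tree_def using mset_eq_imp_distinct_iff[of "leaves T" "[1..<N+1]"] by simp
    then show ?thesis using tree unfolding mode_tree_def wft_def by blast
  qed
  have labT: "set (leaves T) = {1..N}" using tree unfolding mode_tree_def label_leaves by blast
  have fval: "\<forall>k. \<forall>n\<in>set (leaves T). idx k n < R {n}"
  proof (intro allI ballI)
    fix k n assume n: "n \<in> set (leaves T)"
    have "idx k \<in> idx_set N D" using bij_betwE[OF idx_bij] by blast
    then show "idx k n < R {n}" using n labT R_leaf unfolding idx_set_def by auto
  qed
  define G where "G s \<mu> i j = deriv (\<lambda>x. phiH L idx R T (upd (\<Theta> s) \<mu> i j x)) (\<Theta> s \<mu> i j)" for s \<mu> i j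
  have entD: "((\<lambda>s. \<Theta> s (label s') a b) has_real_derivative - G s (label s') a b) (at s within {0..})"
    if sp: "(s', p') \<in> set (nodes_pc R 1 T)" and a: "a < R (label s')" and b: "b < p'" and s: "s \<ge> 0"
    for s' p' a b s
    using flow sp a b s unfolding gradient_flow_def G_def by fastforce
  have rowE: "(Node cs, p) \<in> set (nodes_pc R 1 T)" "r < R V" using nu r V_def by auto
  have colE: "(c, R V) \<in> set (nodes_pc R 1 T)" if "c \<in> set cs" for c
    using nodes_child[OF nu that] V_def by simp
  define E where "E s = (\<Sum>j<p. \<Theta> s V r j * \<Theta> s V r j) +
      (\<Sum>c\<in>set cs. \<Sum>i<R (label c). \<Theta> s (label c) i r * \<Theta> s (label c) i r)" for s
  define E' where "E' s = (\<Sum>j<p. - G s V r j * \<Theta> s V r j + - G s V r j * \<Theta> s V r j) +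
      (\<Sum>c\<in>set cs. \<Sum>i<R (label c). - G s (label c) i r * \<Theta> s (label c) i r + - G s (label c) i r * \<Theta> s (label c) i r)" for s
  have der: "(E has_real_derivative E' s) (at s within {0..})" if s: "s \<ge> 0" for s
  proof -
    have rowD: "((\<lambda>s. \<Theta> s V r j) has_real_derivative - G s V r j) (at s within {0..})"
      if "j \<in> {..<p}" for j
      using entD[OF rowE(1) _ _ s] rowE(2) that unfolding V_def by auto
    have colD: "((\<lambda>s. \<Theta> s (label c) i r) has_real_derivative - G s (label c) i r) (at s within {0..})"
      if c: "c \<in> set cs" and i: "i \<in> {..<R (label c)}" for c i
      using entD[OF colE[OF c] _ _ s] rowE(2) i by auto
    show ?thesis unfolding E_def[abs_def] E'_def
      by (intro DERIV_add DERIV_sum DERIV_mult rowD colD; assumption)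
  qed
  have nn: "E s \<ge> 0" for s unfolding E_def by (intro add_nonneg_nonneg sum_nonneg) auto
  have sqE: "\<Theta> s \<mu> a b * \<Theta> s \<mu> a b \<le> E s" if lc: "isLC R cs p r \<mu> a b" for s \<mu> a b
  proof -
    have A: "0 \<le> (\<Sum>j<p. \<Theta> s V r j * \<Theta> s V r j)" by (intro sum_nonneg) auto
    have B: "0 \<le> (\<Sum>c\<in>set cs. \<Sum>i<R (label c). \<Theta> s (label c) i r * \<Theta> s (label c) i r)"
      by (intro sum_nonneg) auto
    from lc consider "\<mu> = V" "a = r" "b < p" | c where "c \<in> set cs" "\<mu> = label c" "a < R \<mu>" "b = r"
      unfolding isLC_def V_def by blast
    then show ?thesis
    proof cases
      case 1
      have "\<Theta> s V r b * \<Theta> s V r b \<le> (\<Sum>j<p. \<Theta> s V r j * \<Theta> s V r j)"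
        using 1 by (intro member_le_sum[where f="\<lambda>j. \<Theta> s V r j * \<Theta> s V r j"]) auto
      then show ?thesis unfolding E_def using 1 B by simp
    next
      case 2
      have "\<Theta> s (label c) a r * \<Theta> s (label c) a r \<le> (\<Sum>i<R (label c). \<Theta> s (label c) i r * \<Theta> s (label c) i r)"
        using 2 by (intro member_le_sum[where f="\<lambda>i. \<Theta> s (label c) i r * \<Theta> s (label c) i r"]) auto
      also have "\<dots> \<le> (\<Sum>c\<in>set cs. \<Sum>i<R (label c). \<Theta> s (label c) i r * \<Theta> s (label c) i r)"
        using 2 by (intro member_le_sum[where f="\<lambda>c. \<Sum>i<R (label c). \<Theta> s (label c) i r * \<Theta> s (label c) i r"])
          (auto intro: sum_nonneg)
      finally show ?thesis unfolding E_def using 2 A by simp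
    qed
  qed
  have absE: "\<bar>\<Theta> s \<mu> a b\<bar> \<le> sqrt (E s)" if lc: "isLC R cs p r \<mu> a b" for s \<mu> a b
  proof -
    have "sqrt (\<Theta> s \<mu> a b * \<Theta> s \<mu> a b) \<le> sqrt (E s)" using sqE[OF lc] by (rule real_sqrt_le_mono)
    then show ?thesis by (simp add: real_sqrt_mult_self)
  qed
  have E0: "E t0 = 0"
  proof -
    have r0: "\<Theta> t0 V r j = 0" if "j < p" for j using t0(2) that unfolding LC_zero_def V_def by blast
    have c0: "\<Theta> t0 (label c) i r = 0" if "c \<in> set cs" "i < R (label c)" for c i
      using t0(2) that unfolding LC_zero_def by blast
    show ?thesis unfolding E_def using r0 c0 by simp
  qed
  have main: "E t = 0" if t: "t \<ge> 0" for t
  proof -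
    define Tm where "Tm = max t t0"
    define Ent where "Ent = (\<Union>(s', p')\<in>set (nodes_pc R 1 T). (\<lambda>(a, b). (label s', a, b)) ` ({..<R (label s')} \<times> {..<p'}))"
    have finEnt: "finite Ent" unfolding Ent_def by auto
    have "\<forall>e\<in>Ent. \<exists>B. \<forall>s\<in>{0..Tm}. \<bar>(\<lambda>e s. case e of (\<mu>, a, b) \<Rightarrow> \<Theta> s \<mu> a b) e s\<bar> \<le> B"
    proof
      fix e assume "e \<in> Ent"
      then obtain s' p' a b where sp: "(s', p') \<in> set (nodes_pc R 1 T)" and a: "a < R (label s')" and b: "b < p'"
        and e: "e = (label s', a, b)" unfolding Ent_def by auto
      have "continuous_on {0..Tm} (\<lambda>s. \<Theta> s (label s') a b)"
        unfolding continuous_on_eq_continuous_within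
      proof
        fix s :: real assume s: "s \<in> {0..Tm}"
        have "continuous (at s within {0..}) (\<lambda>s. \<Theta> s (label s') a b)"
          using entD[OF sp a b] s by (intro DERIV_continuous) auto
        then show "continuous (at s within {0..Tm}) (\<lambda>s. \<Theta> s (label s') a b)"
          by (rule continuous_within_subset) auto
      qed
      from cont_bound[OF this] show "\<exists>B. \<forall>s\<in>{0..Tm}. \<bar>(\<lambda>e s. case e of (\<mu>, a, b) \<Rightarrow> \<Theta> s \<mu> a b) e s\<bar> \<le> B"
        using e by simp
    qed
    from finite_unif_bound[OF finEnt this] obtain M0 where
      M0: "\<forall>e\<in>Ent. \<forall>s\<in>{0..Tm}. \<bar>(case e of (\<mu>, a, b) \<Rightarrow> \<Theta> s \<mu> a b)\<bar> \<le> M0" by auto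
    define M where "M = max M0 1"
    have M1: "M \<ge> 1" unfolding M_def by simp
    have hM: "\<forall>(s', p')\<in>set (nodes_pc R 1 T). \<forall>a<R (label s'). \<forall>b<p'. \<bar>\<Theta> s (label s') a b\<bar> \<le> M"
      if s: "s \<in> {0..Tm}" for s
    proof (intro ballI allI impI, clarify)
      fix s' p' a b assume sp: "(s', p') \<in> set (nodes_pc R 1 T)" and a: "a < R (label s')" and b: "b < p'"
      have "(label s', a, b) \<in> Ent" unfolding Ent_def using sp a b by force
      then have "\<bar>\<Theta> s (label s') a b\<bar> \<le> M0" using M0 s by fastforce
      then show "\<bar>\<Theta> s (label s') a b\<bar> \<le> M" unfolding M_def by simp
    qed
    obtain K Bt where KB: "K \<ge> 0" "Bt \<ge> 0" and lip: "\<forall>\<theta> \<theta>' \<delta> q f. \<delta> \<ge> 0 \<longrightarrow>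
     (\<forall>(s', p')\<in>set (nodes_pc R 1 T). \<forall>i<R (label s'). \<forall>j<p'.
        \<bar>\<theta> (label s') i j\<bar> \<le> M \<and> \<bar>\<theta>' (label s') i j\<bar> \<le> M \<and> \<bar>\<theta> (label s') i j - \<theta>' (label s') i j\<bar> \<le> \<delta>) \<longrightarrow>
     q < 1 \<longrightarrow> (\<forall>n\<in>set (leaves T). f n < R {n}) \<longrightarrow>
     \<bar>tens R \<theta> T q f\<bar> \<le> Bt \<and> \<bar>tens R \<theta> T q f - tens R \<theta>' T q f\<bar> \<le> K * \<delta>"
      using tens_lip[of M R 1 T] M1 by auto
    obtain G0 where G0: "G0 \<ge> 0" "\<forall>y\<in>cball 0 (real CARD('i) * Bt). norm (grad L y) \<le> G0"
      using grad_bound[OF L_smooth] by blast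
    have inY: "end_tensor idx R T (\<Theta> s) \<in> cball 0 (real CARD('i) * Bt)" if s: "s \<in> {0..Tm}" for s
    proof -
      have "\<forall>(s', p')\<in>set (nodes_pc R 1 T). \<forall>i<R (label s'). \<forall>j<p'.
        \<bar>\<Theta> s (label s') i j\<bar> \<le> M \<and> \<bar>\<Theta> s (label s') i j\<bar> \<le> M \<and> \<bar>\<Theta> s (label s') i j - \<Theta> s (label s') i j\<bar> \<le> 0"
        using hM[OF s] by fastforce
      then have cb: "\<bar>tens R (\<Theta> s) T 0 (idx k)\<bar> \<le> Bt" for k
        using lip fval by blast
      have "norm (end_tensor idx R T (\<Theta> s)) \<le> (\<Sum>k\<in>UNIV. \<bar>end_tensor idx R T (\<Theta> s) $ k\<bar>)"
        by (rule norm_le_l1_cart)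
      also have "\<dots> \<le> real (card (UNIV::'i set)) * Bt"
        by (rule sum_bounded_above) (use cb in \<open>auto simp: end_tensor_def\<close>)
      finally show ?thesis by (simp add: dist_norm)
    qed
    define Gb where "Gb = G0 * (real CARD('i) * (2 * K))"
    have Gb0: "Gb \<ge> 0" unfolding Gb_def using G0 KB by simp
    have Gbound: "\<bar>G s \<mu> a b\<bar> \<le> Gb * sqrt (E s)"
      if s: "s \<in> {0..Tm}" and lc: "isLC R cs p r \<mu> a b" for s \<mu> a b
    proof -
      have hd: "\<forall>\<mu> a b. isLC R cs p r \<mu> a b \<longrightarrow> \<bar>\<Theta> s \<mu> a b\<bar> \<le> sqrt (E s)" using absE by blast
      have "\<bar>G s \<mu> a b\<bar> \<le> norm (grad L (end_tensor idx R T (\<Theta> s))) * (real CARD('i) * (2 * K * sqrt (E s)))"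
        unfolding G_def
        by (rule key_bound[OF wT nu L_diff fval lip M1 hM[OF s] hd _ lc]) (use nn in simp)
      also have "\<dots> \<le> G0 * (real CARD('i) * (2 * K * sqrt (E s)))"
        by (rule mult_right_mono) (use G0 inY[OF s] KB nn[of s] in auto)
      finally show ?thesis unfolding Gb_def by (simp add: algebra_simps)
    qed
    have termB: "\<bar>- G s \<mu> a b * \<Theta> s \<mu> a b + - G s \<mu> a b * \<Theta> s \<mu> a b\<bar> \<le> 2 * Gb * E s"
      if s: "s \<in> {0..Tm}" and lc: "isLC R cs p r \<mu> a b" for s \<mu> a b
    proof -
      have "\<bar>- G s \<mu> a b * \<Theta> s \<mu> a b + - G s \<mu> a b * \<Theta> s \<mu> a b\<bar> = 2 * (\<bar>G s \<mu> a b\<bar> * \<bar>\<Theta> s \<mu> a b\<bar>)"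
        by (simp add: abs_mult)
      also have "\<dots> \<le> 2 * ((Gb * sqrt (E s)) * sqrt (E s))"
        using Gbound[OF s lc] absE[OF lc] by (intro mult_left_mono mult_mono) auto
      also have "\<dots> = 2 * Gb * E s" using nn[of s] by (simp add: mult.assoc)
      finally show ?thesis .
    qed
    define C where "C = 2 * Gb * (real p + (\<Sum>c\<in>set cs. real (R (label c))))"
    have bnd: "\<bar>E' s\<bar> \<le> C * E s" if s0: "0 \<le> s" "s \<le> Tm" for s
    proof -
      have s: "s \<in> {0..Tm}" using s0 by simp
      have A: "\<bar>\<Sum>j<p. - G s V r j * \<Theta> s V r j + - G s V r j * \<Theta> s V r j\<bar> \<le> real (card {..<p}) * (2 * Gb * E s)"
        by (rule abs_sum_le_card) (use termB[OF s] in \<open>auto simp: isLC_def V_def\<close>)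
      have B: "\<bar>\<Sum>c\<in>set cs. \<Sum>i<R (label c). - G s (label c) i r * \<Theta> s (label c) i r + - G s (label c) i r * \<Theta> s (label c) i r\<bar>
          \<le> (\<Sum>c\<in>set cs. real (R (label c)) * (2 * Gb * E s))"
      proof -
        have "\<bar>\<Sum>c\<in>set cs. \<Sum>i<R (label c). - G s (label c) i r * \<Theta> s (label c) i r + - G s (label c) i r * \<Theta> s (label c) i r\<bar>
          \<le> (\<Sum>c\<in>set cs. \<bar>\<Sum>i<R (label c). - G s (label c) i r * \<Theta> s (label c) i r + - G s (label c) i r * \<Theta> s (label c) i r\<bar>)"
          by (rule sum_abs)
        also have "\<dots> \<le> (\<Sum>c\<in>set cs. real (R (label c)) * (2 * Gb * E s))"
        proof (rule sum_mono)
          fix c assume c: "c \<in> set cs"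
          have "\<bar>\<Sum>i<R (label c). - G s (label c) i r * \<Theta> s (label c) i r + - G s (label c) i r * \<Theta> s (label c) i r\<bar>
             \<le> real (card {..<R (label c)}) * (2 * Gb * E s)"
            by (rule abs_sum_le_card) (use termB[OF s] c in \<open>auto simp: isLC_def\<close>)
          then show "\<bar>\<Sum>i<R (label c). - G s (label c) i r * \<Theta> s (label c) i r + - G s (label c) i r * \<Theta> s (label c) i r\<bar>
             \<le> real (R (label c)) * (2 * Gb * E s)" by simp
        qed
        finally show ?thesis .
      qed
      have "\<bar>E' s\<bar> \<le> real p * (2 * Gb * E s) + (\<Sum>c\<in>set cs. real (R (label c)) * (2 * Gb * E s))"
        unfolding E'_def using A B by (simp add: abs_triangle_ineq order_trans[OF abs_triangle_ineq add_mono])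
      also have "\<dots> = C * E s" unfolding C_def by (simp add: sum_distrib_right sum_distrib_left algebra_simps)
      finally show ?thesis .
    qed
    show ?thesis
      by (rule gronwall0[OF der bnd nn t0(1) _ E0 t]) (auto simp: Tm_def)
  qed
  show ?thesis
  proof (intro allI impI)
    fix t :: real assume t: "t \<ge> 0"
    have Et: "E t = 0" using main[OF t] .
    have A: "0 \<le> (\<Sum>j<p. \<Theta> t V r j * \<Theta> t V r j)" by (intro sum_nonneg) auto
    have B: "0 \<le> (\<Sum>c\<in>set cs. \<Sum>i<R (label c). \<Theta> t (label c) i r * \<Theta> t (label c) i r)"
      by (intro sum_nonneg) auto
    have z: "\<Theta> t \<mu> a b = 0" if lc: "isLC R cs p r \<mu> a b" for \<mu> a b
      using sqE[OF lc, of t] Et by (simp add: mult_le_0_iff) linarith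
    show "LC_zero R (\<Theta> t) cs p r"
      unfolding LC_zero_def using z unfolding isLC_def by auto
  qed
qed

end
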